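(* The interactive synthesis algorithm terminates after $O((n+m)\cdot|\bar{P}^*|^2)$ iterations, where $|\bar{P}^*|$ is the number of nodes in the AST of the true program $\bar{P}^*$, $n$ is the number of tables in the database, and $m$ is the number of columns in the database.
   Context: Setting: a DSL of database queries given by a context-free grammar with select, project and inner-join operations; holes are either tables in a sequence of inner-joins (nonterminal $I$) or columns (nonterminal $C$). A sketch is a program with holes; a refinement fills holes with grammar expressions; a completion is a refinement with no holes. $\bar{P}^*$ is the true (user-intended) complete program, assumed derivable from the user's initial sketch, and the user oracle answers $\mathcal{O}(Q)=\mathbb{I}[Q\xRightarrow{*}\bar{P}^*]$. The algorithm keeps a current sketch $P$ and a set $\mathcal{N}$ of rejected questions; each iteration it forms the candidate questions (refinements of $P$ filling one hole, and all same-named holes, with a column $c_i$, a table $t_i$, or $t_i\Join_{C,C}I$) minus $\mathcal{N}$, asks the user about one of them $\hat Q$, and sets $P\gets\hat Q$ if accepted, else adds $\hat Q$ to $\mathcal{N}$; it stops when $P$ has no holes. *)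

theory Defs
  imports Main
begin

text \<open>Grammar:
  Q ::= Proj [C,...,C] Q | Sel C op v Q | From I
  I ::= t_i | t_i JOIN_{C,C} I
  C ::= c_i
 Tables t_i and columns c_i are identified by natural-number indices; the
 database has n tables (indices < n) and m columns (indices < m).\<close>

datatype col = Col nat | CHole nat

datatype tbls = Tab nat | Join nat col col tbls | IHole nat

datatype query =
    Proj "col list" query
  | Sel col nat nat query   \<comment> \<open>selection on a column with operator code and constant value\<close>
  | From tbls

fun csize :: "col \<Rightarrow> nat" where
  "csize _ = 1"

fun tsize :: "tbls \<Rightarrow> nat" where
  "tsize (Tab _) = 1"
| "tsize (IHole _) = 1"
| "tsize (Join _ c1 c2 r) = 2 + csize c1 + csize c2 + tsize r"

fun qsize :: "query \<Rightarrow> nat" where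
  "qsize (Proj cs q) = 1 + sum_list (map csize cs) + qsize q"
| "qsize (Sel c _ _ q) = 3 + csize c + qsize q"
| "qsize (From t) = 1 + tsize t"

fun chole_c :: "col \<Rightarrow> nat set" where
  "chole_c (Col _) = {}"
| "chole_c (CHole h) = {h}"

fun chole_t :: "tbls \<Rightarrow> nat set" where
  "chole_t (Tab _) = {}"
| "chole_t (IHole _) = {}"
| "chole_t (Join _ c1 c2 r) = chole_c c1 \<union> chole_c c2 \<union> chole_t r"

fun chole_q :: "query \<Rightarrow> nat set" where
  "chole_q (Proj cs q) = \<Union>(set (map chole_c cs)) \<union> chole_q q"
| "chole_q (Sel c _ _ q) = chole_c c \<union> chole_q q"
| "chole_q (From t) = chole_t t"

fun ihole_t :: "tbls \<Rightarrow> nat set" where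
  "ihole_t (Tab _) = {}"
| "ihole_t (IHole h) = {h}"
| "ihole_t (Join _ _ _ r) = ihole_t r"

fun ihole_q :: "query \<Rightarrow> nat set" where
  "ihole_q (Proj _ q) = ihole_q q"
| "ihole_q (Sel _ _ _ q) = ihole_q q"
| "ihole_q (From t) = ihole_t t"

definition complete :: "query \<Rightarrow> bool" where
  "complete P \<longleftrightarrow> chole_q P = {} \<and> ihole_q P = {}"

definition next_name :: "query \<Rightarrow> nat" where
  "next_name P = Suc (Max (insert 0 (chole_q P \<union> ihole_q P)))"

fun cols_c :: "col \<Rightarrow> nat set" where
  "cols_c (Col i) = {i}"
| "cols_c (CHole _) = {}"

fun cols_t :: "tbls \<Rightarrow> nat set" where
  "cols_t (Tab _) = {}"
| "cols_t (IHole _) = {}"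
| "cols_t (Join _ c1 c2 r) = cols_c c1 \<union> cols_c c2 \<union> cols_t r"

fun cols_q :: "query \<Rightarrow> nat set" where
  "cols_q (Proj cs q) = \<Union>(set (map cols_c cs)) \<union> cols_q q"
| "cols_q (Sel c _ _ q) = cols_c c \<union> cols_q q"
| "cols_q (From t) = cols_t t"

fun tabs_t :: "tbls \<Rightarrow> nat set" where
  "tabs_t (Tab i) = {i}"
| "tabs_t (IHole _) = {}"
| "tabs_t (Join i _ _ r) = insert i (tabs_t r)"

fun tabs_q :: "query \<Rightarrow> nat set" where
  "tabs_q (Proj _ q) = tabs_q q"
| "tabs_q (Sel _ _ _ q) = tabs_q q"
| "tabs_q (From t) = tabs_t t"

definition in_schema :: "nat \<Rightarrow> nat \<Rightarrow> query \<Rightarrow> bool" where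
  "in_schema n m P \<longleftrightarrow> (\<forall>i\<in>tabs_q P. i < n) \<and> (\<forall>j\<in>cols_q P. j < m)"

fun inst_c :: "(nat \<Rightarrow> col) \<Rightarrow> col \<Rightarrow> col" where
  "inst_c sc (Col i) = Col i"
| "inst_c sc (CHole h) = sc h"

fun inst_t :: "(nat \<Rightarrow> col) \<Rightarrow> (nat \<Rightarrow> tbls) \<Rightarrow> tbls \<Rightarrow> tbls" where
  "inst_t sc si (Tab i) = Tab i"
| "inst_t sc si (IHole h) = si h"
| "inst_t sc si (Join i c1 c2 r) = Join i (inst_c sc c1) (inst_c sc c2) (inst_t sc si r)"

fun inst_q :: "(nat \<Rightarrow> col) \<Rightarrow> (nat \<Rightarrow> tbls) \<Rightarrow> query \<Rightarrow> query" where
  "inst_q sc si (Proj cs q) = Proj (map (inst_c sc) cs) (inst_q sc si q)"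
| "inst_q sc si (Sel c op v q) = Sel (inst_c sc c) op v (inst_q sc si q)"
| "inst_q sc si (From t) = From (inst_t sc si t)"

text \<open>Q derives P (Q =>* P): P is obtained from Q by filling its holes, all
  holes with the same name being filled with the same expression.\<close>
definition derives :: "query \<Rightarrow> query \<Rightarrow> bool" where
  "derives Q P \<longleftrightarrow> (\<exists>sc si. inst_q sc si Q = P)"

definition fill_col :: "nat \<Rightarrow> col \<Rightarrow> query \<Rightarrow> query" where
  "fill_col h c P = inst_q (\<lambda>k. if k = h then c else CHole k) IHole P"

definition fill_I :: "nat \<Rightarrow> tbls \<Rightarrow> query \<Rightarrow> query" where
  "fill_I h e P = inst_q CHole (\<lambda>k. if k = h then e else IHole k) P"

definition candidates :: "nat \<Rightarrow> nat \<Rightarrow> query \<Rightarrow> query set" where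
  "candidates n m P =
     {fill_col h (Col i) P | h i. h \<in> chole_q P \<and> i < m}
   \<union> {fill_I h (Tab i) P | h i. h \<in> ihole_q P \<and> i < n}
   \<union> {fill_I h (Join i (CHole (next_name P)) (CHole (Suc (next_name P)))
                       (IHole (Suc (Suc (next_name P))))) P | h i. h \<in> ihole_q P \<and> i < n}"

text \<open>One iteration of the algorithm on state (P, N), user oracle for the
  true program Pstar. The choice of the question is arbitrary
  (nondeterministic). The algorithm stops when P has no holes.\<close>
definition alg_step :: "nat \<Rightarrow> nat \<Rightarrow> query \<Rightarrow> query \<times> query set \<Rightarrow> query \<times> query set \<Rightarrow> bool" where
  "alg_step n m Pstar s s' \<longleftrightarrow>
     (\<not> complete (fst s) \<and>
      (\<exists>Q \<in> candidates n m (fst s) - snd s.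
         s' = (if derives Q Pstar then (Q, snd s) else (fst s, insert Q (snd s)))))"

end

theory Submission
  imports Defs
begin

fun vc :: "col \<Rightarrow> nat" where
  "vc (Col _) = 3" | "vc (CHole _) = 2"
fun vt :: "tbls \<Rightarrow> nat" where
  "vt (Tab _) = 3" | "vt (IHole _) = 2" | "vt (Join _ c1 c2 r) = 6 + vc c1 + vc c2 + vt r"
fun vq :: "query \<Rightarrow> nat" where
  "vq (Proj cs q) = 3 + sum_list (map vc cs) + vq q"
| "vq (Sel c _ _ q) = 9 + vc c + vq q"
| "vq (From t) = 3 + vt t"

lemma vc_ge2: "2 \<le> vc c" by (cases c) auto
lemma vt_ge2: "2 \<le> vt t" by (cases t) auto

lemma vc_le: "vc c \<le> 3" by (cases c) auto
lemma vt_le: "vt t \<le> 3 * tsize t"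
proof (induction t)
  case (Join i c1 c2 r) then show ?case using vc_le[of c1] vc_le[of c2] by simp
qed auto
lemma vl_le: "sum_list (map vc cs) \<le> 3 * sum_list (map csize cs)"
proof (induction cs)
  case (Cons c cs) then show ?case using vc_le[of c] by simp
qed auto
lemma vq_le: "vq q \<le> 3 * qsize q"
proof (induction q)
  case (Proj cs q) then show ?case using vl_le[of cs] by simp
next
  case (Sel c op v q) then show ?case using vc_le[of c] by simp
qed (use vt_le in auto)

lemma vc_mono: "vc c \<le> vc (inst_c sc c)" by (cases c) (auto simp: vc_ge2)
lemma vl_mono: "sum_list (map vc cs) \<le> sum_list (map (vc \<circ> inst_c sc) cs)"
  by (induction cs) (auto intro: add_mono vc_mono)
lemma vl_mono': "sum_list (map vc cs) \<le> sum_list (map (\<lambda>a. vc (inst_c sc a)) cs)"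
  using vl_mono[of cs sc] by (simp add: comp_def)
lemma vt_mono: "vt t \<le> vt (inst_t sc si t)"
  by (induction t) (auto simp: vt_ge2 intro: add_mono vc_mono)
lemma vq_mono: "vq q \<le> vq (inst_q sc si q)"
  by (induction q) (auto intro: add_mono vc_mono vt_mono vl_mono)

lemma vc_strict: "h \<in> chole_c c \<Longrightarrow> 2 < vc (sc h) \<Longrightarrow> vc c < vc (inst_c sc c)"
  by (cases c) auto
lemma vl_strict: "h \<in> \<Union>(set (map chole_c cs)) \<Longrightarrow> 2 < vc (sc h) \<Longrightarrow>
   sum_list (map vc cs) < sum_list (map (vc \<circ> inst_c sc) cs)"
proof (induction cs)
  case (Cons c cs)
  show ?case
  proof (cases "h \<in> chole_c c")
    case True
    then show ?thesis using vc_strict[of h c sc] True Cons.prems(2) vl_mono[of cs sc] vl_mono'[of cs sc] by simp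
  next
    case False
    then show ?thesis using Cons vc_mono[of c sc] by simp
  qed
qed simp
lemma vt_strict_c: "h \<in> chole_t t \<Longrightarrow> 2 < vc (sc h) \<Longrightarrow> vt t < vt (inst_t sc si t)"
proof (induction t)
  case (Join i c1 c2 r)
  then show ?case
    using vc_strict[of h c1 sc] vc_strict[of h c2 sc] vc_mono[of c1 sc] vc_mono[of c2 sc] vt_mono[of r sc si]
    by auto
qed auto
lemma vt_strict_i: "h \<in> ihole_t t \<Longrightarrow> 2 < vt (si h) \<Longrightarrow> vt t < vt (inst_t sc si t)"
proof (induction t)
  case (Join i c1 c2 r)
  then show ?case
    using vc_mono[of c1 sc] vc_mono[of c2 sc]
    by auto
qed auto
lemma vq_strict_c: "h \<in> chole_q q \<Longrightarrow> 2 < vc (sc h) \<Longrightarrow> vq q < vq (inst_q sc si q)"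
proof (induction q)
  case (Proj cs q)
  then show ?case using vl_strict[of h cs sc] vl_mono[of cs sc] vq_mono[of q sc si]
    by (cases "h \<in> chole_q q") auto
next
  case (Sel c op v q)
  then show ?case using vc_strict[of h c sc] vc_mono[of c sc] vq_mono[of q sc si]
    by (cases "h \<in> chole_q q") auto
qed (auto simp: vt_strict_c)
lemma vq_strict_i: "h \<in> ihole_q q \<Longrightarrow> 2 < vt (si h) \<Longrightarrow> vq q < vq (inst_q sc si q)"
proof (induction q)
  case (Proj cs q)
  then show ?case using vl_mono[of cs sc] by auto
next
  case (Sel c op v q)
  then show ?case using vc_mono[of c sc] by auto
qed (auto simp: vt_strict_i)

lemma inst_c_comp: "inst_c sc (inst_c sc' c) = inst_c (\<lambda>k. inst_c sc (sc' k)) c"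
  by (cases c) auto
lemma inst_t_comp: "inst_t sc si (inst_t sc' si' t) = inst_t (\<lambda>k. inst_c sc (sc' k)) (\<lambda>k. inst_t sc si (si' k)) t"
  by (induction t) (auto simp: inst_c_comp)
lemma inst_q_comp: "inst_q sc si (inst_q sc' si' q) = inst_q (\<lambda>k. inst_c sc (sc' k)) (\<lambda>k. inst_t sc si (si' k)) q"
  by (induction q) (auto simp: inst_c_comp inst_t_comp)

lemma inst_c_cong: "(\<forall>k\<in>chole_c c. sc k = sc' k) \<Longrightarrow> inst_c sc c = inst_c sc' c"
  by (cases c) auto
lemma inst_t_cong: "(\<forall>k\<in>chole_t t. sc k = sc' k) \<Longrightarrow> (\<forall>k\<in>ihole_t t. si k = si' k) \<Longrightarrow>
  inst_t sc si t = inst_t sc' si' t"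
  by (induction t) (auto intro: inst_c_cong)
lemma inst_q_cong: "(\<forall>k\<in>chole_q q. sc k = sc' k) \<Longrightarrow> (\<forall>k\<in>ihole_q q. si k = si' k) \<Longrightarrow>
  inst_q sc si q = inst_q sc' si' q"
proof (induction q)
  case (Proj cs q)
  then have "map (inst_c sc) cs = map (inst_c sc') cs"
    by (auto intro!: map_cong inst_c_cong)
  with Proj show ?case by auto
qed (auto intro: inst_c_cong inst_t_cong)

lemma chole_inst_c: "h \<in> chole_c c \<Longrightarrow> chole_c (sc h) \<union> cols_c (sc h) \<subseteq> chole_c (inst_c sc c) \<union> cols_c (inst_c sc c)"
  by (cases c) auto
lemma chole_inst_c1: "h \<in> chole_c c \<Longrightarrow> chole_c (sc h) \<subseteq> chole_c (inst_c sc c)"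
  by (cases c) auto
lemma cols_inst_c1: "h \<in> chole_c c \<Longrightarrow> cols_c (sc h) \<subseteq> cols_c (inst_c sc c)"
  by (cases c) auto
lemma chole_inst_t: "h \<in> chole_t t \<Longrightarrow> chole_c (sc h) \<subseteq> chole_t (inst_t sc si t) \<and> cols_c (sc h) \<subseteq> cols_t (inst_t sc si t)"
  by (induction t) (use chole_inst_c1 cols_inst_c1 in fastforce)+
lemma chole_inst_q: "h \<in> chole_q q \<Longrightarrow> chole_c (sc h) \<subseteq> chole_q (inst_q sc si q) \<and> cols_c (sc h) \<subseteq> cols_q (inst_q sc si q)"
proof (induction q)
  case (Proj cs q)
  show ?case
  proof (cases "h \<in> chole_q q")
    case True
    then show ?thesis using Proj by auto
  next
    case False
    then obtain c where c: "c \<in> set cs" "h \<in> chole_c c" using Proj.prems by auto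
    then show ?thesis using chole_inst_c1[OF c(2), of sc] cols_inst_c1[OF c(2), of sc] by auto
  qed
qed (auto dest: chole_inst_c1 cols_inst_c1 chole_inst_t)
lemma ihole_inst_t: "h \<in> ihole_t t \<Longrightarrow> ihole_t (si h) \<subseteq> ihole_t (inst_t sc si t) \<and> tabs_t (si h) \<subseteq> tabs_t (inst_t sc si t)"
  by (induction t) auto
lemma ihole_inst_q: "h \<in> ihole_q q \<Longrightarrow> ihole_t (si h) \<subseteq> ihole_q (inst_q sc si q) \<and> tabs_t (si h) \<subseteq> tabs_q (inst_q sc si q)"
  by (induction q) (auto dest: ihole_inst_t)


lemma fin_chole_c: "finite (chole_c c)" by (cases c) auto
lemma fin_chole_t: "finite (chole_t t)" by (induction t) (auto simp: fin_chole_c)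
lemma fin_chole_q: "finite (chole_q q)" by (induction q) (auto simp: fin_chole_c fin_chole_t)
lemma fin_ihole_t: "finite (ihole_t t)" by (induction t) auto
lemma fin_ihole_q: "finite (ihole_q q)" by (induction q) (auto simp: fin_ihole_t)

lemma lt_next: "k \<in> chole_q P \<union> ihole_q P \<Longrightarrow> k < next_name P"
proof -
  assume k: "k \<in> chole_q P \<union> ihole_q P"
  have "finite (insert 0 (chole_q P \<union> ihole_q P))" using fin_chole_q fin_ihole_q by auto
  then have "k \<le> Max (insert 0 (chole_q P \<union> ihole_q P))" using k by auto
  then show ?thesis unfolding next_name_def by simp
qed

lemma card_chole_c: "card (chole_c c) \<le> vc c" by (cases c) auto
lemma card_chole_l: "card (\<Union>(set (map chole_c cs))) \<le> sum_list (map vc cs)"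
proof (induction cs)
  case (Cons c cs)
  have "card (\<Union>(set (map chole_c (c # cs)))) \<le> card (chole_c c) + card (\<Union>(set (map chole_c cs)))"
    by (simp add: card_Un_le)
  then show ?case using Cons card_chole_c[of c] by simp
qed simp
lemma card_chole_t: "card (chole_t t) \<le> vt t"
proof (induction t)
  case (Join i c1 c2 r)
  have "card (chole_t (Join i c1 c2 r)) \<le> card (chole_c c1) + card (chole_c c2) + card (chole_t r)"
    by (simp add: card_Un_le order_trans[OF card_Un_le] add_mono)
  then show ?case using Join card_chole_c[of c1] card_chole_c[of c2] by simp
qed auto
lemma card_chole_q: "card (chole_q q) \<le> vq q"
proof (induction q)
  case (Proj cs q)
  have "card (chole_q (Proj cs q)) \<le> card (\<Union>(set (map chole_c cs))) + card (chole_q q)"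
    by (simp add: card_Un_le)
  then show ?case using Proj card_chole_l[of cs] by simp
next
  case (Sel c op v q)
  have "card (chole_q (Sel c op v q)) \<le> card (chole_c c) + card (chole_q q)"
    by (simp add: card_Un_le)
  then show ?case using Sel card_chole_c[of c] by simp
next
  case (From t) then show ?case using card_chole_t[of t] by simp
qed
lemma card_ihole_t: "card (ihole_t t) \<le> vt t" by (induction t) auto
lemma card_ihole_q: "card (ihole_q q) \<le> vq q" by (induction q) (auto simp: card_ihole_t le_SucI trans_le_add2)

lemma cand_eq: "candidates n m P =
     (\<lambda>(h,i). fill_col h (Col i) P) ` (chole_q P \<times> {..<m})
   \<union> (\<lambda>(h,i). fill_I h (Tab i) P) ` (ihole_q P \<times> {..<n})
   \<union> (\<lambda>(h,i). fill_I h (Join i (CHole (next_name P)) (CHole (Suc (next_name P)))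
                       (IHole (Suc (Suc (next_name P))))) P) ` (ihole_q P \<times> {..<n})"
  unfolding candidates_def by auto

lemma cand_finite: "finite (candidates n m P)"
  unfolding cand_eq using fin_chole_q fin_ihole_q by auto

lemma cand_card: "card (candidates n m P) \<le> vq P * (m + 2 * n)"
proof -
  have "card (candidates n m P) \<le> card (chole_q P \<times> {..<m}) + card (ihole_q P \<times> {..<n}) + card (ihole_q P \<times> {..<n})"
    unfolding cand_eq
    by (rule order_trans[OF card_Un_le] add_mono order_trans[OF card_Un_le] card_image_le
        | simp add: fin_chole_q fin_ihole_q)+
  also have "\<dots> = card (chole_q P) * m + card (ihole_q P) * n + card (ihole_q P) * n"
    by (simp add: card_cartesian_product)
  also have "\<dots> \<le> vq P * m + vq P * n + vq P * n"
    using card_chole_q[of P] card_ihole_q[of P] by (intro add_mono mult_le_mono1) auto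
  finally show ?thesis by (simp add: algebra_simps)
qed


lemma cand_grow: "Q \<in> candidates n m P \<Longrightarrow> vq P < vq Q"
  unfolding candidates_def fill_col_def fill_I_def
  by (auto intro: vq_strict_c vq_strict_i)

lemma derives_le: "derives P Pstar \<Longrightarrow> vq P \<le> 3 * qsize Pstar"
  unfolding derives_def using vq_mono vq_le order_trans by blast

lemma good_cand:
  assumes inst: "inst_q sc si P = Pstar" and cp: "complete Pstar" and sch: "in_schema n m Pstar"
    and nc: "\<not> complete P"
  shows "\<exists>Q \<in> candidates n m P. derives Q Pstar"
proof (cases "chole_q P = {}")
  case False
  then obtain h where h: "h \<in> chole_q P" by auto
  from chole_inst_q[OF h, of sc si] inst cp sch
  have "chole_c (sc h) = {}" "\<forall>j\<in>cols_c (sc h). j < m"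
    unfolding complete_def in_schema_def by auto
  then obtain i where sci: "sc h = Col i" "i < m" by (cases "sc h") auto
  let ?Q = "fill_col h (Col i) P"
  have "?Q \<in> candidates n m P" unfolding candidates_def using h sci by blast
  moreover have "inst_q sc si ?Q = Pstar"
  proof -
    have e1: "(\<lambda>k. inst_c sc (if k = h then Col i else CHole k)) = sc" using sci by (auto simp: fun_eq_iff)
    have e2: "(\<lambda>k. inst_t sc si (IHole k)) = si" by (auto simp: fun_eq_iff)
    show ?thesis unfolding fill_col_def inst_q_comp e1 e2 using inst by simp
  qed
  ultimately show ?thesis unfolding derives_def by blast
next
  case True
  with nc obtain h where h: "h \<in> ihole_q P" unfolding complete_def by auto
  from ihole_inst_q[OF h, of si sc] inst cp sch
  have ih: "ihole_t (si h) = {}" "\<forall>j\<in>tabs_t (si h). j < n"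
    unfolding complete_def in_schema_def by auto
  show ?thesis
  proof (cases "si h")
    case (Tab i)
    let ?Q = "fill_I h (Tab i) P"
    have "?Q \<in> candidates n m P" unfolding candidates_def using h Tab ih by auto
    moreover have "inst_q sc si ?Q = Pstar"
    proof -
      have e1: "(\<lambda>k. inst_c sc (CHole k)) = sc" by (auto simp: fun_eq_iff)
      have e2: "(\<lambda>k. inst_t sc si (if k = h then Tab i else IHole k)) = si" using Tab by (auto simp: fun_eq_iff)
      show ?thesis unfolding fill_I_def inst_q_comp e1 e2 using inst by simp
    qed
    ultimately show ?thesis unfolding derives_def by blast
  next
    case (IHole x) then show ?thesis using ih by simp
  next
    case (Join i c1 c2 r)
    define a where "a = next_name P"
    let ?e = "Join i (CHole a) (CHole (Suc a)) (IHole (Suc (Suc a)))"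
    let ?Q = "fill_I h ?e P"
    have "?Q \<in> candidates n m P" unfolding candidates_def a_def using h Join ih by auto
    moreover have "inst_q (sc(a := c1, Suc a := c2)) (si(Suc (Suc a) := r)) ?Q = Pstar"
    proof -
      have "inst_q (sc(a := c1, Suc a := c2)) (si(Suc (Suc a) := r)) ?Q
          = inst_q (sc(a := c1, Suc a := c2)) (\<lambda>k. if k = h then Join i c1 c2 r else (si(Suc (Suc a) := r)) k) P"
        unfolding fill_I_def inst_q_comp
        by (rule arg_cong2[where f="\<lambda>x y. inst_q x y P"]) (auto simp: fun_eq_iff)
      also have "\<dots> = inst_q sc si P"
      proof (rule inst_q_cong)
        show "\<forall>k\<in>chole_q P. (sc(a := c1, Suc a := c2)) k = sc k"
        proof
          fix k assume "k \<in> chole_q P"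
          then have "k < a" using lt_next[of k P] unfolding a_def by blast
          then show "(sc(a := c1, Suc a := c2)) k = sc k" by simp
        qed
        show "\<forall>k\<in>ihole_q P. (if k = h then Join i c1 c2 r else (si(Suc (Suc a) := r)) k) = si k"
        proof
          fix k assume "k \<in> ihole_q P"
          then have "k < a" using lt_next[of k P] unfolding a_def by blast
          then show "(if k = h then Join i c1 c2 r else (si(Suc (Suc a) := r)) k) = si k" using Join by simp
        qed
      qed
      finally show ?thesis using inst by simp
    qed
    ultimately show ?thesis unfolding derives_def by blast
  qed
qed


definition phi :: "nat \<Rightarrow> nat \<Rightarrow> query \<Rightarrow> query \<times> query set \<Rightarrow> nat" where
  "phi n m Pstar s = (3 * qsize Pstar - vq (fst s)) * (3 * qsize Pstar * (m + 2 * n) + 1)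
     + card (candidates n m (fst s) - snd s)"

lemma step_dec:
  assumes d: "derives (fst s) Pstar" and st: "alg_step n m Pstar s s'"
  shows "derives (fst s') Pstar \<and> phi n m Pstar s' < phi n m Pstar s"
proof -
  obtain P N where s: "s = (P, N)" by (cases s)
  let ?C = "3 * qsize Pstar * (m + 2 * n)"
  from st obtain Q where Q: "Q \<in> candidates n m P" "Q \<notin> N"
    and s': "s' = (if derives Q Pstar then (Q, N) else (P, insert Q N))"
    unfolding alg_step_def s by auto
  show ?thesis
  proof (cases "derives Q Pstar")
    case True
    have lt: "vq P < vq Q" using cand_grow[OF Q(1)] .
    have le: "vq Q \<le> 3 * qsize Pstar" using derives_le[OF True] .
    have "card (candidates n m Q - N) \<le> card (candidates n m Q)"
      using cand_finite by (intro card_mono) auto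
    also have "\<dots> \<le> vq Q * (m + 2 * n)" by (rule cand_card)
    also have "\<dots> \<le> ?C" using le by (intro mult_le_mono1) simp
    finally have cc: "card (candidates n m Q - N) \<le> ?C" .
    define a where "a = 3 * qsize Pstar - vq Q"
    define b where "b = 3 * qsize Pstar - vq P"
    have ab: "a + 1 \<le> b" using lt le unfolding a_def b_def by simp
    have "phi n m Pstar s' = a * (?C + 1) + card (candidates n m Q - N)"
      unfolding phi_def s' a_def using True by simp
    also have "\<dots> < (a + 1) * (?C + 1)" using cc by simp
    also have "\<dots> \<le> b * (?C + 1)" using ab by (intro mult_le_mono1)
    also have "\<dots> \<le> phi n m Pstar s" unfolding phi_def s b_def by simp
    finally show ?thesis using True s' by simp
  next
    case False
    have "candidates n m P - insert Q N = (candidates n m P - N) - {Q}" by auto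
    moreover have "card ((candidates n m P - N) - {Q}) < card (candidates n m P - N)"
      using Q cand_finite by (intro card_Diff1_less) auto
    ultimately show ?thesis using False s' d unfolding phi_def s by simp
  qed
qed

lemma iter:
  "(alg_step n m Pstar ^^ k) s0 s \<Longrightarrow> derives (fst s0) Pstar \<Longrightarrow>
   derives (fst s) Pstar \<and> phi n m Pstar s + k \<le> phi n m Pstar s0"
proof (induction k arbitrary: s)
  case 0 then show ?case by simp
next
  case (Suc k)
  from Suc.prems(1) obtain s1 where s1: "(alg_step n m Pstar ^^ k) s0 s1" "alg_step n m Pstar s1 s"
    by auto
  from Suc.IH[OF s1(1) Suc.prems(2)] step_dec[OF _ s1(2)] show ?case by fastforce
qed

lemma reach:
  "(alg_step n m Pstar)\<^sup>*\<^sup>* s0 s \<Longrightarrow> derives (fst s0) Pstar \<Longrightarrow> (\<forall>Q\<in>snd s0. \<not> derives Q Pstar) \<Longrightarrow>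
   derives (fst s) Pstar \<and> (\<forall>Q\<in>snd s. \<not> derives Q Pstar)"
proof (induction rule: rtranclp_induct)
  case base then show ?case by simp
next
  case (step y z)
  then show ?case unfolding alg_step_def by (auto split: if_splits)
qed

lemma has_table_t: "ihole_t t = {} \<Longrightarrow> tabs_t t \<noteq> {}" by (induction t) auto
lemma has_table_q: "ihole_q q = {} \<Longrightarrow> tabs_q q \<noteq> {}" by (induction q) (auto dest: has_table_t)

theorem theorem2:
  "\<exists>K::nat. \<forall>(n::nat) (m::nat) Pstar P0.
     complete Pstar \<longrightarrow> in_schema n m Pstar \<longrightarrow> derives P0 Pstar \<longrightarrow>
       (\<forall>k s. (alg_step n m Pstar ^^ k) (P0, {}) s \<longrightarrow> k \<le> K * (n + m) * qsize Pstar ^ 2)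
     \<and> (\<forall>s. (alg_step n m Pstar)\<^sup>*\<^sup>* (P0, {}) s \<and> \<not> (\<exists>s'. alg_step n m Pstar s s')
            \<longrightarrow> complete (fst s))"
proof (intro exI[of _ 27] allI impI conjI)
  fix n m Pstar P0
  assume cp: "complete Pstar" and sch: "in_schema n m Pstar" and d: "derives P0 Pstar"
  {
    fix k s assume run: "(alg_step n m Pstar ^^ k) (P0, {}) s"
    define S where "S = qsize Pstar"
    define T where "T = n + m"
    have "tabs_q Pstar \<noteq> {}" using cp has_table_q unfolding complete_def by auto
    then have "n \<ge> 1" using sch unfolding in_schema_def by fastforce
    then have T1: "T \<ge> 1" unfolding T_def by simp
    have S1: "S \<ge> 1" unfolding S_def by (cases Pstar) auto
    have "k \<le> phi n m Pstar (P0, {})" using iter[OF run] d by simp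
    also have "\<dots> \<le> 3 * S * (3 * S * (m + 2 * n) + 1) + 3 * S * (m + 2 * n)"
    proof -
      have "card (candidates n m P0) \<le> vq P0 * (m + 2 * n)" by (rule cand_card)
      also have "\<dots> \<le> 3 * S * (m + 2 * n)" using derives_le[OF d] unfolding S_def
        by (intro mult_le_mono1)
      finally have "card (candidates n m P0) \<le> 3 * S * (m + 2 * n)" .
      moreover have "(3 * S - vq P0) * (3 * S * (m + 2 * n) + 1) \<le> 3 * S * (3 * S * (m + 2 * n) + 1)"
        by (intro mult_le_mono1) simp
      ultimately show ?thesis unfolding phi_def S_def by simp
    qed
    also have "\<dots> \<le> 3 * S * (6 * S * T + 1) + 6 * S * T"
      unfolding T_def by (intro add_mono mult_le_mono2) auto
    also have "\<dots> = 18 * T * S^2 + 3 * S + 6 * T * S" by (simp add: algebra_simps power2_eq_square)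
    also have "\<dots> \<le> 18 * T * S^2 + 3 * (T * S^2) + 6 * (T * S^2)"
    proof -
      have a: "S \<le> S * S" using S1 by simp
      have "S \<le> T * S" using T1 by simp
      also have "\<dots> \<le> T * S^2" using a by (simp add: power2_eq_square)
      finally have b: "S \<le> T * S^2" .
      have c: "T * S \<le> T * S^2" using a by (simp add: power2_eq_square)
      have "6 * T * S \<le> 6 * (T * S^2)" using c by simp
      then show ?thesis using b by linarith
    qed
    also have "\<dots> = 27 * (n + m) * qsize Pstar ^ 2" unfolding T_def S_def by (simp add: algebra_simps)
    finally show "k \<le> 27 * (n + m) * qsize Pstar ^ 2" .
  }
  {
    fix s assume a: "(alg_step n m Pstar)\<^sup>*\<^sup>* (P0, {}) s \<and> \<not> (\<exists>s'. alg_step n m Pstar s s')"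
    from reach[of n m Pstar "(P0, {})" s] a d
    have inv: "derives (fst s) Pstar" "\<forall>Q\<in>snd s. \<not> derives Q Pstar" by auto
    show "complete (fst s)"
    proof (rule ccontr)
      assume nc: "\<not> complete (fst s)"
      from inv(1) obtain sc si where "inst_q sc si (fst s) = Pstar" unfolding derives_def by blast
      from good_cand[OF this cp sch nc] obtain Q where Q: "Q \<in> candidates n m (fst s)" "derives Q Pstar"
        by blast
      with inv(2) have "Q \<in> candidates n m (fst s) - snd s" by auto
      then have "alg_step n m Pstar s (if derives Q Pstar then (Q, snd s) else (fst s, insert Q (snd s)))"
        unfolding alg_step_def using nc by blast
      with a show False by blast
    qed
  }
qed

end
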